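(* Consider a Hex region that is completely filled with black and white stones. Changing the color of a single stone from black to white increases the number of connected components of Black's stones by at most 2.
   Context: A Hex region is a set of hexagonal cells with the usual hexagonal adjacency (each cell has at most six neighbors). Connected components of Black's stones are the maximal sets of black-occupied cells connected through chains of adjacent black cells. *)

theory Defs
  imports Main
begin

text \<open>Hexagonal cells in axial coordinates; each cell has exactly six
  neighbours in the infinite hex lattice.\<close>
type_synonym cell = "int \<times> int"

definition hex_adj :: "cell \<Rightarrow> cell \<Rightarrow> bool" where
  "hex_adj p q \<longleftrightarrow> (fst q - fst p, snd q - snd p) \<in>
     {(1,0), (-1,0), (0,1), (0,-1), (1,-1), (-1,1)}"

definition adj_in :: "cell set \<Rightarrow> (cell \<times> cell) set" where
  "adj_in S = {(p, q). p \<in> S \<and> q \<in> S \<and> hex_adj p q}"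

definition component_of :: "cell set \<Rightarrow> cell \<Rightarrow> cell set" where
  "component_of S p = {q. (p, q) \<in> (adj_in S)\<^sup>*}"

definition components :: "cell set \<Rightarrow> cell set set" where
  "components S = component_of S ` S"

end

theory Submission
  imports Defs
begin

lemma hex_adj_sym: "hex_adj p q \<Longrightarrow> hex_adj q p"
  unfolding hex_adj_def by (cases p; cases q) (auto simp: algebra_simps)

lemma adj_in_sym: "sym (adj_in S)"
  unfolding sym_def adj_in_def by (auto intro: hex_adj_sym)

lemma rt_sym: "(p, q) \<in> (adj_in S)\<^sup>* \<Longrightarrow> (q, p) \<in> (adj_in S)\<^sup>*"
proof -
  assume h: "(p, q) \<in> (adj_in S)\<^sup>*"
  have "sym ((adj_in S)\<^sup>*)" using adj_in_sym by (rule sym_rtrancl)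
  then show ?thesis using h by (rule symD)
qed

lemma comp_eq: "(p, q) \<in> (adj_in S)\<^sup>* \<Longrightarrow> component_of S p = component_of S q"
  unfolding component_of_def using rt_sym[of p q S]
  by (auto intro: rtrancl_trans)

lemma rt_in: "(p, q) \<in> (adj_in S)\<^sup>* \<Longrightarrow> q = p \<or> q \<in> S"
  by (induction rule: rtrancl_induct) (auto simp: adj_in_def)

lemma rt_mono: assumes "(p, q) \<in> (adj_in S)\<^sup>*" "S \<subseteq> T" shows "(p, q) \<in> (adj_in T)\<^sup>*"
proof -
  have "adj_in S \<subseteq> adj_in T" using \<open>S \<subseteq> T\<close> unfolding adj_in_def by auto
  then show ?thesis using \<open>(p, q) \<in> (adj_in S)\<^sup>*\<close> rtrancl_mono by blast
qed

lemma isolated_comp: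
  assumes "p \<in> B - {c}"
    and no: "\<forall>q \<in> component_of (B - {c}) p. \<not> hex_adj q c"
  shows "component_of (B - {c}) p = component_of B p"
proof
  show "component_of (B - {c}) p \<subseteq> component_of B p"
  proof
    fix q assume "q \<in> component_of (B - {c}) p"
    then have "(p, q) \<in> (adj_in (B - {c}))\<^sup>*" by (simp add: component_of_def)
    then have "(p, q) \<in> (adj_in B)\<^sup>*" by (rule rt_mono) blast
    then show "q \<in> component_of B p" by (simp add: component_of_def)
  qed
next
  have "(p, q) \<in> (adj_in B)\<^sup>* \<Longrightarrow> (p, q) \<in> (adj_in (B - {c}))\<^sup>*" for q
  proof (induction rule: rtrancl_induct)
    case base then show ?case by simp
  next
    case (step y z)
    then have yz: "y \<in> B" "z \<in> B" "hex_adj y z" by (auto simp: adj_in_def)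
    have y: "y \<in> component_of (B - {c}) p" using step.IH by (simp add: component_of_def)
    have "y \<noteq> c" using rt_in[OF step.IH] assms(1) by auto
    have "z \<noteq> c" using no y yz(3) by auto
    then have "(y, z) \<in> adj_in (B - {c})" using yz \<open>y \<noteq> c\<close> by (auto simp: adj_in_def)
    with step.IH show ?case by (rule rtrancl_into_rtrancl)
  qed
  then show "component_of B p \<subseteq> component_of (B - {c}) p"
    unfolding component_of_def by blast
qed

lemma card_img_le1:
  assumes "\<forall>x\<in>X. \<forall>y\<in>X. f x = f y"
  shows "card (f ` X) \<le> 1"
proof (cases "X = {}")
  case True then show ?thesis by simp
next
  case False
  then obtain x where "x \<in> X" by blast
  then have "f ` X = {f x}" using assms by blast
  then show ?thesis by simp
qed

lemma pair_le1:
  assumes "hex_adj a b"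
  shows "card (component_of S ` ({a, b} \<inter> S)) \<le> 1"
proof (rule card_img_le1, intro ballI)
  fix x y assume x: "x \<in> {a, b} \<inter> S" and y: "y \<in> {a, b} \<inter> S"
  have ab: "component_of S a = component_of S b" if "a \<in> S" "b \<in> S"
  proof -
    have "(a, b) \<in> adj_in S" using assms that by (simp add: adj_in_def)
    then have "(a, b) \<in> (adj_in S)\<^sup>*" by (rule r_into_rtrancl)
    then show ?thesis by (rule comp_eq)
  qed
  show "component_of S x = component_of S y"
  proof (cases "x = y")
    case True then show ?thesis by simp
  next
    case False
    then have "(x = a \<and> y = b) \<or> (x = b \<and> y = a)" using x y by blast
    then show ?thesis using ab x y by (metis IntD2)
  qed
qed

theorem lemma11p3:
  fixes R Black :: "cell set" and c :: cell
  assumes "finite R"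
    and "Black \<subseteq> R"
    and "c \<in> Black"
  shows "card (components (Black - {c})) \<le> card (components Black) + 2"
proof -
  define B' where "B' = Black - {c}"
  obtain x y where c: "c = (x, y)" by fastforce
  define n0 where "n0 = (x + 1, y)"
  define n1 where "n1 = (x, y + 1)"
  define n2 where "n2 = (x - 1, y + 1)"
  define n3 where "n3 = (x - 1, y)"
  define n4 where "n4 = (x, y - 1)"
  define n5 where "n5 = (x + 1, y - 1)"
  define N where "N = {q \<in> B'. hex_adj q c}"
  have fin: "finite Black" using assms(1,2) finite_subset by blast
  have Nsub: "N \<subseteq> ({n0, n1} \<inter> B') \<union> ({n2, n3} \<inter> B') \<union> ({n4, n5} \<inter> B')"
  proof
    fix q assume "q \<in> N"
    then have qB: "q \<in> B'" and h: "hex_adj q c" by (auto simp: N_def)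
    obtain a b where q: "q = (a, b)" by fastforce
    from h have "(x - a, y - b) \<in> {(1,0), (-1,0), (0,1), (0,-1), (1,-1), (-1,1)}"
      by (simp add: hex_adj_def q c)
    then have "q = n0 \<or> q = n1 \<or> q = n2 \<or> q = n3 \<or> q = n4 \<or> q = n5"
      unfolding q n0_def n1_def n2_def n3_def n4_def n5_def by auto
    then show "q \<in> ({n0, n1} \<inter> B') \<union> ({n2, n3} \<inter> B') \<union> ({n4, n5} \<inter> B')"
      using qB by blast
  qed
  have a01: "hex_adj n0 n1" and a23: "hex_adj n2 n3" and a45: "hex_adj n4 n5"
    by (auto simp: hex_adj_def n0_def n1_def n2_def n3_def n4_def n5_def)
  define I where "I = component_of B' ` N"
  have "I \<subseteq> component_of B' ` ({n0, n1} \<inter> B') \<union> component_of B' ` ({n2, n3} \<inter> B')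
      \<union> component_of B' ` ({n4, n5} \<inter> B')"
    unfolding I_def using Nsub by blast
  then have "card I \<le> card (component_of B' ` ({n0, n1} \<inter> B') \<union> component_of B' ` ({n2, n3} \<inter> B')
      \<union> component_of B' ` ({n4, n5} \<inter> B'))"
    by (intro card_mono) auto
  also have "\<dots> \<le> 3"
  proof -
    let ?A = "component_of B' ` ({n0, n1} \<inter> B')"
    let ?B = "component_of B' ` ({n2, n3} \<inter> B')"
    let ?C = "component_of B' ` ({n4, n5} \<inter> B')"
    have "card (?A \<union> ?B \<union> ?C) \<le> card (?A \<union> ?B) + card ?C" by (rule card_Un_le)
    also have "\<dots> \<le> card ?A + card ?B + card ?C" using card_Un_le[of ?A ?B] by linarith
    finally show ?thesis
      using pair_le1[OF a01, of B'] pair_le1[OF a23, of B'] pair_le1[OF a45, of B'] by linarith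
  qed
  finally have I3: "card I \<le> 3" .
  define C where "C = component_of Black c"
  have CB: "C \<in> components Black" using assms(3) by (simp add: C_def components_def)
  have sub: "components B' \<subseteq> (components Black - {C}) \<union> I"
  proof
    fix K assume "K \<in> components B'"
    then obtain p where p: "p \<in> B'" and K: "K = component_of B' p"
      by (auto simp: components_def)
    show "K \<in> (components Black - {C}) \<union> I"
    proof (cases "\<exists>q \<in> component_of B' p. hex_adj q c")
      case True
      then obtain q where q: "q \<in> component_of B' p" "hex_adj q c" by blast
      have pq: "(p, q) \<in> (adj_in B')\<^sup>*" using q(1) by (simp add: component_of_def)
      have "q \<in> B'" using rt_in[OF pq] p by auto
      then have "q \<in> N" using q(2) by (simp add: N_def)
      moreover have "K = component_of B' q" using comp_eq[OF pq] K by simp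
      ultimately show ?thesis by (auto simp: I_def)
    next
      case False
      then have eq: "K = component_of Black p"
        using isolated_comp[of p Black c] p K by (auto simp: B'_def)
      have "c \<notin> K"
      proof
        assume "c \<in> K"
        then have "(p, c) \<in> (adj_in B')\<^sup>*" by (simp add: K component_of_def)
        from rt_in[OF this] p show False by (auto simp: B'_def)
      qed
      moreover have "c \<in> C" by (simp add: C_def component_of_def)
      moreover have "K \<in> components Black" using eq p by (auto simp: B'_def components_def)
      ultimately show ?thesis by auto
    qed
  qed
  have finC: "finite (components Black)" using fin by (simp add: components_def)
  have finI: "finite I" unfolding I_def N_def B'_def using fin by simp
  have "card (components B') \<le> card ((components Black - {C}) \<union> I)"
    using sub finC finI by (intro card_mono) auto
  also have "\<dots> \<le> card (components Black - {C}) + card I" by (rule card_Un_le)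
  also have "\<dots> = card (components Black) - 1 + card I"
    using CB finC by simp
  also have "\<dots> \<le> card (components Black) + 2"
    using I3 CB finC card_gt_0_iff[of "components Black"] by auto
  finally show ?thesis by (simp add: B'_def)
qed

end
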